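(* Consider the algorithm CAB described in the context, and suppose that for all users $i\in\mathcal U$, all $\boldsymbol{x}\in\mathbb R^d$ and all $s\ge0$, $|\boldsymbol{w}_{i,s}^\top\boldsymbol{x}-\boldsymbol{u}_i^\top\boldsymbol{x}|\le\mathrm{CB}_{i,s}(\boldsymbol{x})$. Let $t\le T$ and let $\boldsymbol{x}_t^*\in\arg\max_{\boldsymbol{x}\in C_t}\boldsymbol{u}_{i_t}^\top\boldsymbol{x}$. Then the instantaneous regret of CAB at round $t$ satisfies \[ r_t\le(3\alpha(T)+2)\Big(\mathbf 1\{\widehat N_{i_t,t}(\boldsymbol{x}_t^* )\ne N_{i_t}(\boldsymbol{x}_t^* )\}+\mathbf 1\{\widehat N_{i_t,t}(\bar{\boldsymbol{x}}_t)\ne N_{i_t}(\bar{\boldsymbol{x}}_t)\}\Big)+2\,\mathrm{CB}_{N_{i_t}(\bar{\boldsymbol{x}}_t),t-1}(\bar{\boldsymbol{x}}_t). \]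
   Context: Model. Users $\mathcal U=\{1,\dots,n\}$ with unknown unit vectors $\boldsymbol{u}_i\in\mathbb R^d$; $N_i(\boldsymbol{x})=\{j:\boldsymbol{u}_j^\top\boldsymbol{x}=\boldsymbol{u}_i^\top\boldsymbol{x}\}$. At round $t$ the learner receives $i_t$ and $C_t=\{\boldsymbol{x}_{t,1},..,\boldsymbol{x}_{t,c_t}\}$ with $\|\boldsymbol{x}_{t,k}\|\le1$, picks $\bar{\boldsymbol{x}}_t\in C_t$, observes $y_t\in[-1,1]$. Regret $r_t=\max_{\boldsymbol{x}\in C_t}\boldsymbol{u}_{i_t}^\top\boldsymbol{x}-\boldsymbol{u}_{i_t}^\top\bar{\boldsymbol{x}}_t$. Algorithm CAB (parameters $\gamma>0$, positive nondecreasing function $\alpha$). Initialize $\boldsymbol{b}_{i,0}=\boldsymbol0$, $M_{i,0}=I_d$; $\boldsymbol{w}_{i,s}=M_{i,s}^{-1}\boldsymbol{b}_{i,s}$, $\mathrm{CB}_{i,s}(\boldsymbol{x})=\alpha(s)\sqrt{\boldsymbol{x}^\top M_{i,s}^{-1}\boldsymbol{x}}$; for nonempty $N\subseteq\mathcal U$, $\boldsymbol{w}_{N,s}=\frac1{|N|}\sum_{j\in N}\boldsymbol{w}_{j,s}$, $\mathrm{CB}_{N,s}(\boldsymbol{x})=\frac1{|N|}\sum_{j\in N}\mathrm{CB}_{j,s}(\boldsymbol{x})$. At round $t$, for any $\boldsymbol{x}$ the estimated neighborhood is $\widehat N_{i_t,t}(\boldsymbol{x})=\{j:|\boldsymbol{w}_{i_t,t-1}^\top\boldsymbol{x}-\boldsymbol{w}_{j,t-1}^\top\boldsymbol{x}|\le\mathrm{CB}_{i_t,t-1}(\boldsymbol{x})+\mathrm{CB}_{j,t-1}(\boldsymbol{x})\}$;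 CAB chooses $\bar{\boldsymbol{x}}_t=\boldsymbol{x}_{t,k_t}$ with $k_t\in\arg\max_k(\boldsymbol{w}_{\widehat N_{i_t,t}(\boldsymbol{x}_{t,k}),t-1}^\top\boldsymbol{x}_{t,k}+\mathrm{CB}_{\widehat N_{i_t,t}(\boldsymbol{x}_{t,k}),t-1}(\boldsymbol{x}_{t,k}))$. Update: if $\mathrm{CB}_{i_t,t-1}(\bar{\boldsymbol{x}}_t)\ge\gamma/4$, only user $i_t$ is updated by $M\leftarrow M+\bar{\boldsymbol{x}}_t\bar{\boldsymbol{x}}_t^\top$, $\boldsymbol b\leftarrow\boldsymbol b+y_t\bar{\boldsymbol{x}}_t$; otherwise this update is applied to every $j\in\widehat N_{i_t,t}(\bar{\boldsymbol{x}}_t)$ with $\mathrm{CB}_{j,t-1}(\bar{\boldsymbol{x}}_t)<\gamma/4$; others unchanged. *)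

theory Defs
  imports "HOL-Analysis.Analysis"
begin

text \<open>A state is a pair (M, b) of per-user Gram matrices and vectors.
Round t (t >= 1) uses the state after t-1 rounds, i.e. the state with index t-1.\<close>

type_synonym ('u,'d) cab_st = "('u \<Rightarrow> real^'d^'d) \<times> ('u \<Rightarrow> real^'d)"

definition cab_w :: "('u \<Rightarrow> real^'d^'d) \<Rightarrow> ('u \<Rightarrow> real^'d) \<Rightarrow> 'u \<Rightarrow> real^'d" where
  "cab_w M b i = matrix_inv (M i) *v b i"

definition cab_CB :: "(nat \<Rightarrow> real) \<Rightarrow> nat \<Rightarrow> ('u \<Rightarrow> real^'d^'d) \<Rightarrow> 'u \<Rightarrow> real^'d \<Rightarrow> real" where
  "cab_CB \<alpha> s M i x = \<alpha> s * sqrt (x \<bullet> (matrix_inv (M i) *v x))"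

definition cab_wN :: "('u \<Rightarrow> real^'d^'d) \<Rightarrow> ('u \<Rightarrow> real^'d) \<Rightarrow> 'u set \<Rightarrow> real^'d" where
  "cab_wN M b N = (1 / real (card N)) *\<^sub>R (\<Sum>j\<in>N. cab_w M b j)"

definition cab_CBN :: "(nat \<Rightarrow> real) \<Rightarrow> nat \<Rightarrow> ('u \<Rightarrow> real^'d^'d) \<Rightarrow> 'u set \<Rightarrow> real^'d \<Rightarrow> real" where
  "cab_CBN \<alpha> s M N x = (\<Sum>j\<in>N. cab_CB \<alpha> s M j x) / real (card N)"

definition cab_Nhat :: "(nat \<Rightarrow> real) \<Rightarrow> nat \<Rightarrow> ('u \<Rightarrow> real^'d^'d) \<Rightarrow> ('u \<Rightarrow> real^'d) \<Rightarrow> 'u \<Rightarrow> real^'d \<Rightarrow> 'u set" where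
  "cab_Nhat \<alpha> s M b i x =
     {j. \<bar>cab_w M b i \<bullet> x - cab_w M b j \<bullet> x\<bar> \<le> cab_CB \<alpha> s M i x + cab_CB \<alpha> s M j x}"

definition true_N :: "('u \<Rightarrow> real^'d) \<Rightarrow> 'u \<Rightarrow> real^'d \<Rightarrow> 'u set" where
  "true_N u i x = {j. u j \<bullet> x = u i \<bullet> x}"

definition cab_index :: "(nat \<Rightarrow> real) \<Rightarrow> nat \<Rightarrow> ('u \<Rightarrow> real^'d^'d) \<Rightarrow> ('u \<Rightarrow> real^'d) \<Rightarrow> 'u \<Rightarrow> real^'d \<Rightarrow> real" where
  "cab_index \<alpha> s M b i x =
     cab_wN M b (cab_Nhat \<alpha> s M b i x) \<bullet> x + cab_CBN \<alpha> s M (cab_Nhat \<alpha> s M b i x) x"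

definition outer :: "real^'d \<Rightarrow> real^'d^'d" where
  "outer x = (\<chi> p q. x $ p * x $ q)"

text \<open>State of CAB after s rounds, given user sequence ii, context lists C,
rewards y and chosen indices k (round t plays C t ! k t).\<close>
fun cab_state :: "(nat \<Rightarrow> real) \<Rightarrow> real \<Rightarrow> (nat \<Rightarrow> 'u) \<Rightarrow> (nat \<Rightarrow> (real^'d) list)
    \<Rightarrow> (nat \<Rightarrow> real) \<Rightarrow> (nat \<Rightarrow> nat) \<Rightarrow> nat \<Rightarrow> ('u,'d) cab_st" where
  "cab_state \<alpha> \<gamma> ii C y k 0 = ((\<lambda>_. mat 1), (\<lambda>_. 0))"
| "cab_state \<alpha> \<gamma> ii C y k (Suc s) =
    (let st = cab_state \<alpha> \<gamma> ii C y k s; M = fst st; b = snd st;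
         t = Suc s; x = C t ! k t;
         upd = (if cab_CB \<alpha> s M (ii t) x \<ge> \<gamma> / 4 then {ii t}
                else {j \<in> cab_Nhat \<alpha> s M b (ii t) x. cab_CB \<alpha> s M j x < \<gamma> / 4})
     in ((\<lambda>j. if j \<in> upd then M j + outer x else M j),
         (\<lambda>j. if j \<in> upd then b j + y t *\<^sub>R x else b j)))"

end

theory Submission
  imports Defs
begin

lemma avg_bounds:
  fixes w :: "'u \<Rightarrow> real^'d"
  assumes fin: "finite N" and ne: "N \<noteq> {}"
    and b: "\<forall>j\<in>N. \<bar>w j \<bullet> x - c\<bar> \<le> cb j"
  shows "c \<le> ((1 / real (card N)) *\<^sub>R (\<Sum>j\<in>N. w j)) \<bullet> x + (\<Sum>j\<in>N. cb j) / real (card N)"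
    and "((1 / real (card N)) *\<^sub>R (\<Sum>j\<in>N. w j)) \<bullet> x + (\<Sum>j\<in>N. cb j) / real (card N)
         \<le> c + 2 * ((\<Sum>j\<in>N. cb j) / real (card N))"
proof -
  have cp: "real (card N) > 0" using fin ne by (simp add: card_gt_0_iff)
  have eq: "((1 / real (card N)) *\<^sub>R (\<Sum>j\<in>N. w j)) \<bullet> x + (\<Sum>j\<in>N. cb j) / real (card N)
      = (\<Sum>j\<in>N. w j \<bullet> x + cb j) / real (card N)"
    by (simp add: inner_sum_left sum.distrib add_divide_distrib)
  have s1: "(\<Sum>j\<in>N. c) \<le> (\<Sum>j\<in>N. w j \<bullet> x + cb j)"
    by (rule sum_mono) (use b in fastforce)
  have s2: "(\<Sum>j\<in>N. w j \<bullet> x + cb j) \<le> (\<Sum>j\<in>N. c + 2 * cb j)"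
    by (rule sum_mono) (use b in fastforce)
  have "c = (\<Sum>j\<in>N. c) / real (card N)" using cp by simp
  also have "\<dots> \<le> (\<Sum>j\<in>N. w j \<bullet> x + cb j) / real (card N)"
    using s1 cp by (intro divide_right_mono) auto
  finally show "c \<le> ((1 / real (card N)) *\<^sub>R (\<Sum>j\<in>N. w j)) \<bullet> x + (\<Sum>j\<in>N. cb j) / real (card N)"
    using eq by simp
  have "(\<Sum>j\<in>N. w j \<bullet> x + cb j) / real (card N) \<le> (\<Sum>j\<in>N. c + 2 * cb j) / real (card N)"
    using s2 cp by (simp add: divide_right_mono)
  also have "\<dots> = c + 2 * ((\<Sum>j\<in>N. cb j) / real (card N))"
    using cp by (simp add: sum.distrib sum_distrib_left[symmetric] add_divide_distrib)
  finally show "((1 / real (card N)) *\<^sub>R (\<Sum>j\<in>N. w j)) \<bullet> x + (\<Sum>j\<in>N. cb j) / real (card N)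
         \<le> c + 2 * ((\<Sum>j\<in>N. cb j) / real (card N))" using eq by simp
qed

theorem lemma4:
  fixes u :: "'u::finite \<Rightarrow> real^'d"
    and \<alpha> :: "nat \<Rightarrow> real" and \<gamma> :: real
    and ii :: "nat \<Rightarrow> 'u" and C :: "nat \<Rightarrow> (real^'d) list"
    and y :: "nat \<Rightarrow> real" and k :: "nat \<Rightarrow> nat"
    and t T :: nat and xstar :: "real^'d"
  assumes unit: "\<forall>i. norm (u i) = 1"
    and gamma_pos: "\<gamma> > 0"
    and alpha_pos: "\<forall>s. \<alpha> s > 0" and alpha_mono: "mono \<alpha>"
    and ctx_ne: "\<forall>t'\<ge>1. C t' \<noteq> []"
    and ctx_norm: "\<forall>t'\<ge>1. \<forall>x\<in>set (C t'). norm x \<le> 1"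
    and rew: "\<forall>t'\<ge>1. \<bar>y t'\<bar> \<le> 1"
    and choice: "\<forall>t'\<ge>1. k t' < length (C t') \<and>
        (\<forall>k'<length (C t').
           cab_index \<alpha> (t' - 1) (fst (cab_state \<alpha> \<gamma> ii C y k (t' - 1)))
               (snd (cab_state \<alpha> \<gamma> ii C y k (t' - 1))) (ii t') (C t' ! k')
         \<le> cab_index \<alpha> (t' - 1) (fst (cab_state \<alpha> \<gamma> ii C y k (t' - 1)))
               (snd (cab_state \<alpha> \<gamma> ii C y k (t' - 1))) (ii t') (C t' ! k t'))"
    and conf: "\<forall>i x s. \<bar>cab_w (fst (cab_state \<alpha> \<gamma> ii C y k s)) (snd (cab_state \<alpha> \<gamma> ii C y k s)) i \<bullet> x
                          - u i \<bullet> x\<bar>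
                      \<le> cab_CB \<alpha> s (fst (cab_state \<alpha> \<gamma> ii C y k s)) i x"
    and t_ge: "1 \<le> t" and t_le: "t \<le> T"
    and xstar_in: "xstar \<in> set (C t)"
    and xstar_max: "\<forall>x\<in>set (C t). u (ii t) \<bullet> x \<le> u (ii t) \<bullet> xstar"
  shows "Max ((\<lambda>x. u (ii t) \<bullet> x) ` set (C t)) - u (ii t) \<bullet> (C t ! k t)
    \<le> (3 * \<alpha> T + 2) *
        (of_bool (cab_Nhat \<alpha> (t - 1) (fst (cab_state \<alpha> \<gamma> ii C y k (t - 1)))
                    (snd (cab_state \<alpha> \<gamma> ii C y k (t - 1))) (ii t) xstar
                  \<noteq> true_N u (ii t) xstar)
       + of_bool (cab_Nhat \<alpha> (t - 1) (fst (cab_state \<alpha> \<gamma> ii C y k (t - 1)))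
                    (snd (cab_state \<alpha> \<gamma> ii C y k (t - 1))) (ii t) (C t ! k t)
                  \<noteq> true_N u (ii t) (C t ! k t)))
      + 2 * cab_CBN \<alpha> (t - 1) (fst (cab_state \<alpha> \<gamma> ii C y k (t - 1)))
              (true_N u (ii t) (C t ! k t)) (C t ! k t)"
proof -
  define M where "M = fst (cab_state \<alpha> \<gamma> ii C y k (t - 1))"
  define b where "b = snd (cab_state \<alpha> \<gamma> ii C y k (t - 1))"
  define i where "i = ii t"
  define xb where "xb = C t ! k t"
  define s where "s = t - 1"
  have conf': "\<And>j x. \<bar>cab_w M b j \<bullet> x - u j \<bullet> x\<bar> \<le> cab_CB \<alpha> s M j x"
    using conf unfolding M_def b_def s_def by blast
  have cbnn: "\<And>j x. cab_CB \<alpha> s M j x \<ge> 0" using conf' by (meson abs_ge_zero order_trans)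
  have kt: "k t < length (C t)" using choice t_ge by blast
  have xb_in: "xb \<in> set (C t)" using kt unfolding xb_def by simp
  obtain kst where kst: "kst < length (C t)" "C t ! kst = xstar"
    using xstar_in by (meson in_set_conv_nth)
  have idx: "cab_index \<alpha> s M b i xstar \<le> cab_index \<alpha> s M b i xb"
    using choice t_ge kst unfolding M_def b_def s_def i_def xb_def by metis
  have Maxeq: "Max ((\<lambda>x. u i \<bullet> x) ` set (C t)) = u i \<bullet> xstar"
    by (rule Max_eqI) (use xstar_max xstar_in in \<open>auto simp: i_def\<close>)
  have bnd: "\<And>x. x \<in> set (C t) \<Longrightarrow> \<bar>u i \<bullet> x\<bar> \<le> 1"
  proof -
    fix x assume "x \<in> set (C t)"
    hence "norm x \<le> 1" using ctx_norm t_ge by blast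
    hence "\<bar>u i \<bullet> x\<bar> \<le> norm (u i) * norm x" by (simp add: Cauchy_Schwarz_ineq2)
    also have "\<dots> \<le> 1" using unit \<open>norm x \<le> 1\<close> by simp
    finally show "\<bar>u i \<bullet> x\<bar> \<le> 1" .
  qed
  have reg2: "u i \<bullet> xstar - u i \<bullet> xb \<le> 2" using bnd[OF xstar_in] bnd[OF xb_in] by linarith
  have CBN_nn: "cab_CBN \<alpha> s M (true_N u i xb) xb \<ge> 0"
    unfolding cab_CBN_def by (intro divide_nonneg_nonneg sum_nonneg) (auto simp: cbnn)
  have ap: "\<alpha> T > 0" using alpha_pos by blast
  let ?A = "cab_Nhat \<alpha> s M b i xstar \<noteq> true_N u i xstar"
  let ?B = "cab_Nhat \<alpha> s M b i xb \<noteq> true_N u i xb"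
  have main: "u i \<bullet> xstar - u i \<bullet> xb \<le> (3 * \<alpha> T + 2) * (of_bool ?A + of_bool ?B)
      + 2 * cab_CBN \<alpha> s M (true_N u i xb) xb"
  proof (cases "?A \<or> ?B")
    case True
    hence "of_bool ?A + of_bool ?B \<ge> (1::real)" by auto
    hence "(3 * \<alpha> T + 2) * (of_bool ?A + of_bool ?B) \<ge> (3 * \<alpha> T + 2)"
      using ap mult_left_mono[of 1 "of_bool ?A + of_bool ?B" "3 * \<alpha> T + 2"] by simp
    then show ?thesis using reg2 CBN_nn ap by linarith
  next
    case False
    hence A: "cab_Nhat \<alpha> s M b i xstar = true_N u i xstar"
      and B: "cab_Nhat \<alpha> s M b i xb = true_N u i xb" by auto
    have ne: "\<And>x. true_N u i x \<noteq> {}" unfolding true_N_def by auto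
    have bb: "\<And>x. \<forall>j\<in>true_N u i x. \<bar>cab_w M b j \<bullet> x - u i \<bullet> x\<bar> \<le> cab_CB \<alpha> s M j x"
      using conf' unfolding true_N_def by (metis mem_Collect_eq)
    have l1: "u i \<bullet> xstar \<le> cab_index \<alpha> s M b i xstar"
      unfolding cab_index_def A cab_wN_def cab_CBN_def
      by (rule avg_bounds(1)[OF finite ne bb])
    have l2: "cab_index \<alpha> s M b i xb \<le> u i \<bullet> xb + 2 * cab_CBN \<alpha> s M (true_N u i xb) xb"
      unfolding cab_index_def B cab_wN_def cab_CBN_def
      by (rule avg_bounds(2)[OF finite ne bb])
    show ?thesis using l1 l2 idx False by simp
  qed
  show ?thesis using main Maxeq unfolding M_def b_def i_def xb_def s_def by simp
qed

end
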